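(* Let $H$ be a real Hilbert space with inner product $(\cdot,\cdot)_H$ and norm $\|\cdot\|_H$, let $\Phi\in H$, and let $\mathbf{L}(\Phi)=\mathbf{M}(\Phi)+\mathbf{S}(\Phi)$, where $\mathbf{S}(\Phi)$ is a skew-symmetric linear operator on $H$ and $-\mathbf{M}(\Phi)$ is a symmetric positive definite linear operator on $H$. Assume there are positive constants $\alpha_{\mathbf{M}},\beta_{\mathbf{S}}$ such that for all $\Psi_1,\Psi_2,\Psi\in H$, $$(\mathbf{S}(\Phi)\Psi_1,\Psi_2)_H\le\beta_{\mathbf{S}}\|\Psi_1\|_H\|\Psi_2\|_H,\qquad(-\mathbf{M}(\Phi)\Psi,\Psi)_H\ge\alpha_{\mathbf{M}}\|\Psi\|_H^2.$$ Then for all $\Psi_1,\Psi_2\in H$, $$(\mathbf{L}(\Phi)\Psi_1,\Psi_2)_H\le\Big(1+\tfrac{\beta_{\mathbf{S}}}{\alpha_{\mathbf{M}}}\Big)(\Psi_1,-\mathbf{M}(\Phi)\Psi_1)_H^{1/2}(\Psi_2,-\mathbf{M}(\Phi)\Psi_2)_H^{1/2}.$$ *)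

theory Defs
  imports "HOL-Analysis.Analysis"
begin

end

theory Submission
  imports Defs
begin

lemma semidef_cs:
  fixes A :: "'a::real_inner \<Rightarrow> 'a"
  assumes lin: "linear A" and sym: "\<And>x y. inner (A x) y = inner x (A y)"
    and pos: "\<And>x. inner (A x) x \<ge> 0"
  shows "(inner (A x) y)\<^sup>2 \<le> inner (A x) x * inner (A y) y"
proof (cases "inner (A y) y = 0")
  case False
  then have yp: "inner (A y) y > 0" using pos[of y] by linarith
  define t where "t = inner (A x) y / inner (A y) y"
  have e: "inner (A (x - t *\<^sub>R y)) (x - t *\<^sub>R y)
      = inner (A x) x - 2 * t * inner (A x) y + t\<^sup>2 * inner (A y) y"
    using sym[of x y] sym[of y x]
    by (simp add: linear_diff[OF lin] linear_scale[OF lin] inner_diff_left inner_diff_right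
        inner_commute power2_eq_square algebra_simps)
  have "0 \<le> inner (A x) x - 2 * t * inner (A x) y + t\<^sup>2 * inner (A y) y"
    using pos[of "x - t *\<^sub>R y"] e by simp
  also have "\<dots> = inner (A x) x - (inner (A x) y)\<^sup>2 / inner (A y) y"
    using yp by (simp add: t_def power2_eq_square field_simps)
  finally show ?thesis using yp by (simp add: field_simps)
next
  case True
  have "\<And>t::real. 0 \<le> inner (A x) x - 2 * t * inner (A x) y"
  proof -
    fix t :: real
    have "inner (A (x - t *\<^sub>R y)) (x - t *\<^sub>R y)
      = inner (A x) x - 2 * t * inner (A x) y + t\<^sup>2 * inner (A y) y"
      using sym[of x y] sym[of y x]
      by (simp add: linear_diff[OF lin] linear_scale[OF lin] inner_diff_left inner_diff_right
          inner_commute power2_eq_square algebra_simps)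
    then show "0 \<le> inner (A x) x - 2 * t * inner (A x) y" using pos[of "x - t *\<^sub>R y"] True by simp
  qed
  from this[of "(inner (A x) x + 1) / (2 * inner (A x) y)"]
  have "inner (A x) y = 0"
    by (cases "inner (A x) y = 0") (auto simp: field_simps)
  then show ?thesis using True by simp
qed

theorem lemma3p7:
  fixes M S L :: "'a::{real_inner,complete_space} \<Rightarrow> 'a \<Rightarrow> 'a"
    and \<Phi> :: 'a
    and \<alpha>M \<beta>S :: real
  assumes L_def: "\<And>\<Psi>. L \<Phi> \<Psi> = M \<Phi> \<Psi> + S \<Phi> \<Psi>"
    and S_lin: "linear (S \<Phi>)"
    and S_skew: "\<And>x y. inner (S \<Phi> x) y = - inner x (S \<Phi> y)"
    and M_lin: "linear (M \<Phi>)"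
    and M_sym: "\<And>x y. inner (M \<Phi> x) y = inner x (M \<Phi> y)"
    and M_posdef: "\<And>x. x \<noteq> 0 \<Longrightarrow> inner (- M \<Phi> x) x > 0"
    and \<alpha>_pos: "\<alpha>M > 0" and \<beta>_pos: "\<beta>S > 0"
    and S_bound: "\<And>\<Psi>1 \<Psi>2. inner (S \<Phi> \<Psi>1) \<Psi>2 \<le> \<beta>S * norm \<Psi>1 * norm \<Psi>2"
    and M_coercive: "\<And>\<Psi>. inner (- M \<Phi> \<Psi>) \<Psi> \<ge> \<alpha>M * (norm \<Psi>)\<^sup>2"
  shows "\<forall>\<Psi>1 \<Psi>2. inner (L \<Phi> \<Psi>1) \<Psi>2
           \<le> (1 + \<beta>S / \<alpha>M) * sqrt (inner \<Psi>1 (- M \<Phi> \<Psi>1)) * sqrt (inner \<Psi>2 (- M \<Phi> \<Psi>2))"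
proof (intro allI)
  fix x y :: 'a
  define A where "A = (\<lambda>z. - M \<Phi> z)"
  have Alin: "linear A" unfolding A_def using M_lin by (simp add: linear_compose_neg)
  have Asym: "\<And>x y. inner (A x) y = inner x (A y)" unfolding A_def using M_sym by simp
  have Apos: "\<And>x. inner (A x) x \<ge> 0"
  proof -
    fix z :: 'a have "\<alpha>M * (norm z)\<^sup>2 \<ge> 0" using \<alpha>_pos by simp
    then show "inner (A z) z \<ge> 0" using M_coercive[of z] unfolding A_def by simp
  qed
  have coer: "\<And>z. \<alpha>M * (norm z)\<^sup>2 \<le> inner (A z) z" using M_coercive unfolding A_def by simp
  define ax where "ax = inner (A x) x"
  define ay where "ay = inner (A y) y"
  have ax0: "ax \<ge> 0" "ay \<ge> 0" using Apos ax_def ay_def by auto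
  have cs: "(inner (A x) y)\<^sup>2 \<le> ax * ay" using semidef_cs[OF Alin Asym Apos] ax_def ay_def by simp
  have "- inner (A x) y \<le> sqrt ax * sqrt ay"
  proof -
    have "\<bar>inner (A x) y\<bar> \<le> sqrt (ax * ay)" using cs by (simp add: real_le_rsqrt)
    then show ?thesis by (simp add: real_sqrt_mult)
  qed
  hence Mpart: "inner (M \<Phi> x) y \<le> sqrt ax * sqrt ay" unfolding A_def by simp
  have nx: "norm x \<le> sqrt (ax / \<alpha>M)"
    using coer[of x] \<alpha>_pos ax_def by (intro real_le_rsqrt) (simp add: field_simps)
  have ny: "norm y \<le> sqrt (ay / \<alpha>M)"
    using coer[of y] \<alpha>_pos ay_def by (intro real_le_rsqrt) (simp add: field_simps)
  have "norm x * norm y \<le> sqrt (ax / \<alpha>M) * sqrt (ay / \<alpha>M)"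
    using nx ny ax0 \<alpha>_pos by (intro mult_mono) auto
  also have "\<dots> = sqrt ax * sqrt ay / \<alpha>M"
    using \<alpha>_pos by (simp add: real_sqrt_divide real_sqrt_mult[symmetric] field_simps)
  finally have "\<beta>S * (norm x * norm y) \<le> \<beta>S * (sqrt ax * sqrt ay / \<alpha>M)"
    using \<beta>_pos by (intro mult_left_mono) auto
  hence Spart: "inner (S \<Phi> x) y \<le> \<beta>S / \<alpha>M * (sqrt ax * sqrt ay)"
    using S_bound[of x y] by (simp add: mult.assoc)
  have "inner (L \<Phi> x) y = inner (M \<Phi> x) y + inner (S \<Phi> x) y"
    by (simp add: L_def inner_add_left)
  also have "\<dots> \<le> (1 + \<beta>S / \<alpha>M) * (sqrt ax * sqrt ay)"
    using Mpart Spart by (simp add: distrib_right)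
  finally show "inner (L \<Phi> x) y
           \<le> (1 + \<beta>S / \<alpha>M) * sqrt (inner x (- M \<Phi> x)) * sqrt (inner y (- M \<Phi> y))"
    unfolding ax_def ay_def A_def by (simp add: inner_commute mult.assoc)
qed

end
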